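(* In the epoch setting described in the context, for each $i\in[\rho]$ and each $I\in\mathcal{I}$, there exists an agent in $A^{(i)}$ that visits every state of $I$ during the roundabout process of the $i$-th epoch (i.e., whose set of visited states after the $t$ steps of that process contains $I$).
   Context: Let $n\ge 2$ and $k\ge1$, $\Delta$ be natural numbers, $\mathcal{G}=\langle G_1,\dots,G_L\rangle$ a temporal graph (sequence of graphs on a common $n$-element vertex set $V$), and $T$ a spanning tree of its underlying graph (the union of the snapshots). A snapshot is $k$-edge-deficient w.r.t. $T$ if it contains all but at most $k$ edges of $T$. Let $N=2(n-1)$, fix a DFS tour of $T$ from a root $r$ traversing each edge twice, with cyclic vertex sequence $(v_1,\dots,v_{N+1})$, $v_{N+1}=v_1=r$, tour edges $e_q=\{v_q,v_{q+1}\}$. Circular intervals: $[\![i,j]\!]=\{i,\dots,j\}$ if $i\le j$, $\{i,\dots,N,1,\dots,j\}$ if $i>j$; $[\![i,j[\![=[\![i,j]\!]\setminus\{j\}$. Roundabout process on a sequence $H_1,\dots,H_t$ of graphs: agents $a_1,\dots,a_N$, $s_i(0)=i$; at step $\tau$, if $s_i(\tau-1)=q$ then $s_i(\tau)=(q\bmod N)+1$ if $e_q\in E(H_\tau)$, else $q$; visited states $D_i(\tau)=[\![i,s_i(\tau)]\!]$, $D_i(0)=\{i\}$; active sets $A(0)=$ all agents, and $A(\tau)$ is obtained from $A(\tau-1)$ by repeatedly removing an arbitrary agent $a_i$ with $D_i(\tau)\subseteq\bigcup D_j(\tau)$ over the other current agents, until none remains. Let $t=\lfloor N/(2k)\rfloor$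 and $\rho=\lceil 18k\ln(6k)\rceil$. Assume an initial part of $[L]$ is partitioned into $\rho$ consecutive intervals (epochs), each containing at least $\Delta+t$ snapshots that are $k$-edge-deficient w.r.t. $T$; each epoch's first $\Delta$ time steps form its repositioning part, and the rest (containing at least $t$ such snapshots) is its roundabout part. In epoch $i$, run the roundabout process for $t$ steps on the first $t$ $k$-edge-deficient snapshots of its roundabout part, let $A^{(i)}$ be the active agents after step $t$ and $S^{(i)}$ their initial states. Let $\bigcup_{i\in[\rho]}S^{(i)}=\{m_1<\dots<m_d\}$, $I_j=[\![m_j,m_{j+1}[\![$ for $j\in[d-1]$, $I_d=[\![m_d,m_1[\![$, and $\mathcal{I}=\{I_1,\dots,I_d\}$. *)

theory Defs
  imports Complex_Main
begin

definition edges_on :: "'v set \<Rightarrow> 'v set set" where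
  "edges_on V = {e. \<exists>u w. u \<in> V \<and> w \<in> V \<and> u \<noteq> w \<and> e = {u, w}}"

definition connected_on :: "'v set \<Rightarrow> 'v set set \<Rightarrow> bool" where
  "connected_on V T \<longleftrightarrow> (\<forall>u\<in>V. \<forall>w\<in>V. \<exists>p. p \<noteq> [] \<and> hd p = u \<and> last p = w \<and>
      (\<forall>j < length p - 1. {p ! j, p ! (j+1)} \<in> T))"

definition has_cycle :: "'v set set \<Rightarrow> bool" where
  "has_cycle T \<longleftrightarrow> (\<exists>c. length c \<ge> 3 \<and> distinct c \<and>
      (\<forall>j < length c - 1. {c ! j, c ! (j+1)} \<in> T) \<and> {last c, hd c} \<in> T)"

definition spanning_tree :: "'v set \<Rightarrow> 'v set set \<Rightarrow> 'v set set \<Rightarrow> bool" where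
  "spanning_tree V E T \<longleftrightarrow> T \<subseteq> E \<and> T \<subseteq> edges_on V \<and> connected_on V T \<and> \<not> has_cycle T"

definition k_edge_deficient :: "nat \<Rightarrow> 'v set set \<Rightarrow> 'v set set \<Rightarrow> bool" where
  "k_edge_deficient k T H \<longleftrightarrow> card (T - H) \<le> k"

text \<open>DFS tour of the tree T from root r: a closed walk v 1, ..., v (N+1) with v 1 = v (N+1) = r
  along edges of T traversing every edge of T exactly twice (in a tree these are exactly the DFS tours).\<close>
definition dfs_tour :: "'v set set \<Rightarrow> 'v \<Rightarrow> nat \<Rightarrow> (nat \<Rightarrow> 'v) \<Rightarrow> bool" where
  "dfs_tour T r N v \<longleftrightarrow> v 1 = r \<and> v (N+1) = r \<and>
     (\<forall>q\<in>{1..N}. {v q, v (Suc q)} \<in> T) \<and>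
     (\<forall>e\<in>T. card {q\<in>{1..N}. {v q, v (Suc q)} = e} = 2)"

definition cint :: "nat \<Rightarrow> nat \<Rightarrow> nat \<Rightarrow> nat set" where
  "cint N i j = (if i \<le> j then {i..j} else {i..N} \<union> {1..j})"

definition cinto :: "nat \<Rightarrow> nat \<Rightarrow> nat \<Rightarrow> nat set" where
  "cinto N i j = cint N i j - {j}"

text \<open>State of agent a_i after tau steps on graphs H 1, H 2, ...; e q is the q-th tour edge.\<close>
primrec rstate :: "nat \<Rightarrow> (nat \<Rightarrow> 'v set) \<Rightarrow> (nat \<Rightarrow> 'v set set) \<Rightarrow> nat \<Rightarrow> nat \<Rightarrow> nat" where
  "rstate N e H i 0 = i"
| "rstate N e H i (Suc \<tau>) =
     (if e (rstate N e H i \<tau>) \<in> H (Suc \<tau>) then rstate N e H i \<tau> mod N + 1 else rstate N e H i \<tau>)"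

definition visited :: "nat \<Rightarrow> (nat \<Rightarrow> 'v set) \<Rightarrow> (nat \<Rightarrow> 'v set set) \<Rightarrow> nat \<Rightarrow> nat \<Rightarrow> nat set" where
  "visited N e H i \<tau> = (if \<tau> = 0 then {i} else cint N i (rstate N e H i \<tau>))"

definition removable :: "(nat \<Rightarrow> nat set) \<Rightarrow> nat set \<Rightarrow> nat \<Rightarrow> bool" where
  "removable D A a \<longleftrightarrow> a \<in> A \<and> D a \<subseteq> \<Union> (D ` (A - {a}))"

definition remove_step :: "(nat \<Rightarrow> nat set) \<Rightarrow> nat set \<Rightarrow> nat set \<Rightarrow> bool" where
  "remove_step D A A' \<longleftrightarrow> (\<exists>a. removable D A a \<and> A' = A - {a})"

text \<open>Agent a_i is identified with i.\<close>
definition active_seq :: "nat \<Rightarrow> (nat \<Rightarrow> 'v set) \<Rightarrow> (nat \<Rightarrow> 'v set set) \<Rightarrow> nat \<Rightarrow> (nat \<Rightarrow> nat set) \<Rightarrow> bool" where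
  "active_seq N e H t Aseq \<longleftrightarrow> Aseq 0 = {1..N} \<and>
     (\<forall>\<tau> < t. (remove_step (\<lambda>a. visited N e H a (Suc \<tau>)))\<^sup>*\<^sup>* (Aseq \<tau>) (Aseq (Suc \<tau>)) \<and>
              (\<forall>a. \<not> removable (\<lambda>a. visited N e H a (Suc \<tau>)) (Aseq (Suc \<tau>)) a))"

end

theory Submission
  imports Defs
begin

definition cd :: "nat \<Rightarrow> nat \<Rightarrow> nat \<Rightarrow> nat" where
  "cd N a x = (if a \<le> x then x - a else x + N - a)"

lemma cint_char:
  assumes "a \<in> {1..N}" "s \<in> {1..N}"
  shows "x \<in> cint N a s \<longleftrightarrow> x \<in> {1..N} \<and> cd N a x \<le> cd N a s"
  using assms by (auto simp: cint_def cd_def split: if_splits)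

lemma cd_inj:
  assumes "m \<in> {1..N}" "x \<in> {1..N}" "y \<in> {1..N}" "cd N m x = cd N m y"
  shows "x = y"
  using assms by (auto simp: cd_def split: if_splits)

lemma cd_step:
  assumes "a \<in> {1..N}" "s \<in> {1..N}" "cd N a s + 1 < N"
  shows "cd N a (s mod N + 1) = cd N a s + 1"
proof -
  have "s mod N = (if s = N then 0 else s)" using assms by auto
  then show ?thesis using assms by (auto simp: cd_def split: if_splits)
qed

lemma rstate_props:
  assumes "a \<in> {1..N}" "\<tau> < N"
  shows "rstate N e H a \<tau> \<in> {1..N} \<and> cd N a (rstate N e H a \<tau>) \<le> \<tau>"
  using assms(2)
proof (induction \<tau>)
  case 0
  then show ?case using assms(1) by (simp add: cd_def)
next
  case (Suc \<tau>)
  have lt: "\<tau> < N" using Suc.prems by simp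
  have IH: "rstate N e H a \<tau> \<in> {1..N}" "cd N a (rstate N e H a \<tau>) \<le> \<tau>"
    using Suc.IH[OF lt] by auto
  have N0: "N > 0" using Suc by auto
  have r: "rstate N e H a \<tau> mod N + 1 \<in> {1..N}" using N0
    by (simp add: Suc_leI)
  show ?case
    using IH r cd_step[OF assms(1) IH(1)] Suc.prems by auto
qed

lemma visited_eq: "visited N e H a \<tau> = cint N a (rstate N e H a \<tau>)"
  by (cases \<tau>) (auto simp: visited_def cint_def)

lemma visited_mono:
  assumes "a \<in> {1..N}" "Suc \<tau> < N"
  shows "visited N e H a \<tau> \<subseteq> visited N e H a (Suc \<tau>)"
proof
  fix x assume x: "x \<in> visited N e H a \<tau>"
  let ?s = "rstate N e H a \<tau>"
  have P: "?s \<in> {1..N}" "cd N a ?s \<le> \<tau>"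
    using rstate_props[OF assms(1), of \<tau> e H] assms(2) by auto
  have P2: "rstate N e H a (Suc \<tau>) \<in> {1..N}" using rstate_props[OF assms(1) assms(2), of e H] by auto
  have "cd N a ?s \<le> cd N a (rstate N e H a (Suc \<tau>))"
    using cd_step[OF assms(1) P(1)] P assms(2) by auto
  then show "x \<in> visited N e H a (Suc \<tau>)"
    using x P P2 cint_char[OF assms(1)] unfolding visited_eq by auto
qed

lemma remove_rtc:
  assumes "(remove_step D)\<^sup>*\<^sup>* A A'"
  shows "A' \<subseteq> A \<and> \<Union> (D ` A') = \<Union> (D ` A)"
  using assms
proof (induction rule: rtranclp_induct)
  case base
  then show ?case by simp
next
  case (step y z)
  then obtain a where a: "removable D y a" "z = y - {a}" by (auto simp: remove_step_def)
  have "\<Union> (D ` z) = \<Union> (D ` y)"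
  proof
    show "\<Union> (D ` z) \<subseteq> \<Union> (D ` y)" using a by auto
    show "\<Union> (D ` y) \<subseteq> \<Union> (D ` z)"
    proof
      fix x assume "x \<in> \<Union> (D ` y)"
      then obtain b where b: "b \<in> y" "x \<in> D b" by auto
      show "x \<in> \<Union> (D ` z)"
      proof (cases "b = a")
        case True
        then show ?thesis using a b unfolding removable_def by auto
      next
        case False
        then show ?thesis using a b by auto
      qed
    qed
  qed
  then show ?case using step a by auto
qed

lemma coverage:
  assumes "active_seq N e H t A" "t < N"
  shows "\<tau> \<le> t \<Longrightarrow> A \<tau> \<subseteq> {1..N} \<and> {1..N} \<subseteq> (\<Union>a\<in>A \<tau>. visited N e H a \<tau>)"
proof (induction \<tau>)
  case 0
  then show ?case using assms(1) by (auto simp: active_seq_def visited_def)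
next
  case (Suc \<tau>)
  then have IH: "A \<tau> \<subseteq> {1..N}" "{1..N} \<subseteq> (\<Union>a\<in>A \<tau>. visited N e H a \<tau>)" by auto
  have rt: "(remove_step (\<lambda>a. visited N e H a (Suc \<tau>)))\<^sup>*\<^sup>* (A \<tau>) (A (Suc \<tau>))"
    using assms(1) Suc.prems by (auto simp: active_seq_def)
  note R = remove_rtc[OF rt]
  have "(\<Union>a\<in>A \<tau>. visited N e H a \<tau>) \<subseteq> (\<Union>a\<in>A \<tau>. visited N e H a (Suc \<tau>))"
  proof (rule UN_mono[OF order_refl])
    fix a assume "a \<in> A \<tau>"
    then have "a \<in> {1..N}" using IH(1) by blast
    moreover have "Suc \<tau> < N" using Suc.prems assms(2) by simp
    ultimately show "visited N e H a \<tau> \<subseteq> visited N e H a (Suc \<tau>)" by (rule visited_mono)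
  qed
  then show ?case using R IH by auto
qed

lemma shift_lemma:
  assumes "a \<in> {1..N}" "m \<in> {1..N}" "x \<in> {1..N}" "p \<in> {1..N}"
    "cd N m x \<le> cd N m p" "cd N m p < cd N m a \<or> a = m"
  shows "cd N a x \<le> cd N a p"
  using assms by (auto simp: cd_def split: if_splits)

lemma nxt_props:
  assumes "finite M" "M \<subseteq> {1..N}" "m \<in> M"
    and "nx = (if \<exists>x\<in>M. m < x then Min {x\<in>M. m < x} else Min M)"
  shows "nx \<in> M \<and> (\<forall>x\<in>M. x \<noteq> m \<longrightarrow> cd N m nx \<le> cd N m x) \<and> (nx = m \<longrightarrow> M = {m})"
proof (cases "\<exists>x\<in>M. m < x")
  case True
  let ?S = "{x\<in>M. m < x}"
  have fin: "finite ?S" "?S \<noteq> {}" using assms True by auto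
  have u: "nx \<in> ?S" "\<forall>y\<in>?S. nx \<le> y" using Min_in[OF fin] Min_le[OF fin(1)] assms(4) True by auto
  show ?thesis
  proof (intro conjI ballI impI)
    show "nx \<in> M" using u by auto
    fix x assume "x \<in> M" "x \<noteq> m"
    then show "cd N m nx \<le> cd N m x" using u assms(2) \<open>x \<in> M\<close> by (force simp: cd_def)
  next
    assume "nx = m" then show "M = {m}" using u by auto
  qed
next
  case False
  have fin: "finite M" "M \<noteq> {}" using assms by auto
  have u: "nx \<in> M" "\<forall>y\<in>M. nx \<le> y" using Min_in[OF fin] Min_le[OF fin(1)] assms(4) False by auto
  show ?thesis
  proof (intro conjI ballI impI)
    show "nx \<in> M" using u by auto
    fix x assume "x \<in> M" "x \<noteq> m"
    then show "cd N m nx \<le> cd N m x" using u assms(2,3) False by (force simp: cd_def)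
  next
    assume "nx = m" then show "M = {m}" using u False assms(3) by force
  qed
qed

theorem lemma11:
  fixes V :: "'v set" and G :: "nat \<Rightarrow> 'v set set" and T :: "'v set set" and r :: 'v
    and v :: "nat \<Rightarrow> 'v" and n k \<Delta> L :: nat and b :: "nat \<Rightarrow> nat"
    and Aep :: "nat \<Rightarrow> nat \<Rightarrow> nat set"
  assumes "finite V" and "card V = n" and "n \<ge> 2" and "k \<ge> 1"
    and "\<forall>j\<in>{1..L}. G j \<subseteq> edges_on V"
    and "spanning_tree V (\<Union>j\<in>{1..L}. G j) T"
    and "r \<in> V"
    and "dfs_tour T r (2 * (n - 1)) v"
  defines "N \<equiv> 2 * (n - 1)"
  defines "t \<equiv> N div (2 * k)"
  defines "\<rho> \<equiv> nat \<lceil>18 * real k * ln (6 * real k)\<rceil>"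
  defines "e \<equiv> (\<lambda>q. {v q, v (Suc q)})"
  assumes "b 0 = 0" and "\<forall>j < \<rho>. b j \<le> b (Suc j)" and "b \<rho> \<le> L"
    and "\<forall>i\<in>{1..\<rho>}. card {j \<in> {b (i - 1) + 1 .. b i}. k_edge_deficient k T (G j)} \<ge> \<Delta> + t"
    and "\<forall>i\<in>{1..\<rho>}. card {j \<in> {b (i - 1) + \<Delta> + 1 .. b i}. k_edge_deficient k T (G j)} \<ge> t"
  defines "H \<equiv> (\<lambda>i \<tau>. G (sorted_list_of_set
              {j \<in> {b (i - 1) + \<Delta> + 1 .. b i}. k_edge_deficient k T (G j)} ! (\<tau> - 1)))"
  assumes "\<forall>i\<in>{1..\<rho>}. active_seq N e (H i) t (Aep i)"
  defines "M \<equiv> (\<Union>i\<in>{1..\<rho>}. Aep i t)"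
  defines "nxt \<equiv> (\<lambda>m. if \<exists>x\<in>M. m < x then Min {x\<in>M. m < x} else Min M)"
  shows "\<forall>i\<in>{1..\<rho>}. \<forall>I \<in> (\<lambda>m. cinto N m (nxt m)) ` M.
           \<exists>a\<in>Aep i t. I \<subseteq> visited N e (H i) a t"
proof (intro ballI)
  fix i I assume i: "i \<in> {1..\<rho>}" and I: "I \<in> (\<lambda>m. cinto N m (nxt m)) ` M"
  have N2: "N \<ge> 2" using assms(3) unfolding N_def by auto
  have tN: "t < N"
  proof -
    have "t \<le> N div 2" unfolding t_def using assms(4)
      by (intro div_le_mono2) auto
    then show ?thesis using N2 by linarith
  qed
  have cov: "\<And>j. j \<in> {1..\<rho>} \<Longrightarrow> Aep j t \<subseteq> {1..N} \<and> {1..N} \<subseteq> (\<Union>a\<in>Aep j t. visited N e (H j) a t)"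
  proof -
    fix j assume j: "j \<in> {1..\<rho>}"
    have AS: "\<forall>i\<in>{1..\<rho>}. active_seq N e (H i) t (Aep i)" by fact
    show "Aep j t \<subseteq> {1..N} \<and> {1..N} \<subseteq> (\<Union>a\<in>Aep j t. visited N e (H j) a t)"
      using coverage[OF AS[rule_format, OF j] tN] by simp
  qed
  have MN: "M \<subseteq> {1..N}" unfolding M_def using cov by blast
  have finM: "finite M" using MN finite_subset by blast
  obtain m where m: "m \<in> M" "I = cinto N m (nxt m)" using I by auto
  have mN: "m \<in> {1..N}" using m MN by auto
  note NP = nxt_props[OF finM MN m(1), of "nxt m", OF nxt_def[THEN meta_eq_to_obj_eq, THEN fun_cong]]
  let ?m' = "nxt m"
  have m'N: "?m' \<in> {1..N}" using NP MN by auto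
  show "\<exists>a\<in>Aep i t. I \<subseteq> visited N e (H i) a t"
  proof (cases "?m' = m")
    case True
    then have "I = {}" using m by (simp add: cinto_def cint_def)
    moreover have "Aep i t \<noteq> {}" using cov[OF i] N2 by auto
    ultimately show ?thesis by auto
  next
    case False
    define D where "D = cd N m ?m'"
    have D1: "D \<ge> 1" "D < N" using False mN m'N unfolding D_def cd_def by auto
    define p where "p = (if m + D - 1 \<le> N then m + D - 1 else m + D - 1 - N)"
    have pN: "p \<in> {1..N}" and dp: "cd N m p = D - 1"
      using mN D1 unfolding p_def cd_def by auto
    obtain a where a: "a \<in> Aep i t" "p \<in> visited N e (H i) a t" using cov[OF i] pN by blast
    have aM: "a \<in> M" unfolding M_def using a i by auto
    have aN: "a \<in> {1..N}" using aM MN by auto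
    let ?s = "rstate N e (H i) a t"
    have sN: "?s \<in> {1..N}" using rstate_props[OF aN tN] by auto
    have pa: "cd N a p \<le> cd N a ?s" using a(2) cint_char[OF aN sN] unfolding visited_eq by auto
    have apos: "cd N m p < cd N m a \<or> a = m"
    proof (cases "a = m")
      case False
      then have "D \<le> cd N m a" using NP aM unfolding D_def by auto
      then show ?thesis using dp D1 by auto
    qed auto
    have "I \<subseteq> visited N e (H i) a t"
    proof
      fix x assume x: "x \<in> I"
      then have xc: "x \<in> cint N m ?m'" "x \<noteq> ?m'" using m by (auto simp: cinto_def)
      then have xN: "x \<in> {1..N}" and xd: "cd N m x \<le> D"
        using cint_char[OF mN m'N] unfolding D_def by auto
      have "cd N m x \<noteq> D" using cd_inj[OF mN xN m'N] xc(2) unfolding D_def by auto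
      then have "cd N m x \<le> cd N m p" using xd dp by auto
      then have "cd N a x \<le> cd N a p" using shift_lemma[OF aN mN xN pN _ apos] by auto
      then show "x \<in> visited N e (H i) a t"
        using pa xN cint_char[OF aN sN] unfolding visited_eq by auto
    qed
    then show ?thesis using a(1) by blast
  qed
qed

end
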